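(* Assume the vector variational inequality defined by $F$ and $K$ is monotone. (a) If $\mathcal{A}$ is a bounded connected component of $\mathrm{Sol}^w(F,K)$, then $S^{-1}(\mathcal{A})=\{\xi\in\Delta:S(\xi)\cap\mathcal{A}\neq\emptyset\}$ is open in the induced topology of $\Delta$. (b) If $\mathcal{A}$ is a bounded connected component of $\mathrm{Sol}^{pr}(F,K)$, then $\{\xi\in\operatorname{ri}\Delta:S(\xi)\cap\mathcal{A}\neq\emptyset\}$ is open in the induced topology of $\operatorname{ri}\Delta$.
   Context: Let $K\subset\mathbb{R}^n$ be a nonempty closed convex set and $F_1,\dots,F_m:K\to\mathbb{R}^n$ continuous functions; write $F=(F_1,\dots,F_m)$ and $F(x)(u)=(\langle F_1(x),u\rangle,\dots,\langle F_m(x),u\rangle)$. The problem is monotone if each $F_l$ is monotone on $K$: $\langle F_l(y)-F_l(x),y-x\rangle\ge0$ for all $x,y\in K$. Let $\Delta=\{\xi\in\mathbb{R}^m_+ : \sum_l\xi_l=1\}$, $\operatorname{ri}\Delta=\{\xi\in\Delta:\xi_l>0,\ l=1,\dots,m\}$, and $F_\xi=\sum_l\xi_lF_l$. For $G:K\to\mathbb{R}^n$, $\mathrm{Sol}(G,K)=\{x\in K:\langle G(x),y-x\rangle\ge0\ \forall y\in K\}$. The weak Pareto solution set $\mathrm{Sol}^w(F,K)$ is the set of $x\in K$ with $F(x)(x-y)\notin\operatorname{int}\mathbb{R}^m_+$ for all $y\in K$; it is known that $\mathrm{Sol}^w(F,K)=\bigcup_{\xi\in\Delta}\mathrm{Sol}(F_\xi,K)$.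 The proper Pareto solution set is $\mathrm{Sol}^{pr}(F,K)=\bigcup_{\xi\in\operatorname{ri}\Delta}\mathrm{Sol}(F_\xi,K)$. The basic multifunction is $S(\xi)=\mathrm{Sol}(F_\xi,K)$ for $\xi\in\Delta$. *)

theory Defs
  imports "HOL-Analysis.Analysis"
begin

text \<open>Objectives indexed by the finite type 'm (m = CARD('m)), space R^n = real^'n.
  A family F_1..F_m is a function F :: 'm => real^'n => real^'n.\<close>

definition monotone_on_K :: "(real^'n) set \<Rightarrow> (real^'n \<Rightarrow> real^'n) \<Rightarrow> bool" where
  "monotone_on_K K G \<longleftrightarrow> (\<forall>x\<in>K. \<forall>y\<in>K. inner (G y - G x) (y - x) \<ge> 0)"

definition Delta :: "(real^'m) set" where
  "Delta = {\<xi>. (\<forall>l. \<xi> $ l \<ge> 0) \<and> (\<Sum>l\<in>UNIV. \<xi> $ l) = 1}"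

definition ri_Delta :: "(real^'m) set" where
  "ri_Delta = {\<xi>\<in>Delta. \<forall>l. \<xi> $ l > 0}"

definition Fxi :: "('m::finite \<Rightarrow> real^'n \<Rightarrow> real^'n) \<Rightarrow> real^'m \<Rightarrow> real^'n \<Rightarrow> real^'n" where
  "Fxi F \<xi> x = (\<Sum>l\<in>UNIV. (\<xi> $ l) *\<^sub>R F l x)"

definition VI_Sol :: "(real^'n \<Rightarrow> real^'n) \<Rightarrow> (real^'n) set \<Rightarrow> (real^'n) set" where
  "VI_Sol G K = {x\<in>K. \<forall>y\<in>K. inner (G x) (y - x) \<ge> 0}"

text \<open>Weak Pareto solutions: F(x)(x-y) not in int R^m_+ for all y in K.\<close>
definition Sol_w :: "('m::finite \<Rightarrow> real^'n \<Rightarrow> real^'n) \<Rightarrow> (real^'n) set \<Rightarrow> (real^'n) set" where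
  "Sol_w F K = {x\<in>K. \<forall>y\<in>K. \<not> (\<forall>l. inner (F l x) (x - y) > 0)}"

definition Sol_pr :: "('m::finite \<Rightarrow> real^'n \<Rightarrow> real^'n) \<Rightarrow> (real^'n) set \<Rightarrow> (real^'n) set" where
  "Sol_pr F K = (\<Union>\<xi>\<in>ri_Delta. VI_Sol (Fxi F \<xi>) K)"

definition basicS :: "('m::finite \<Rightarrow> real^'n \<Rightarrow> real^'n) \<Rightarrow> (real^'n) set \<Rightarrow> real^'m \<Rightarrow> (real^'n) set" where
  "basicS F K \<xi> = VI_Sol (Fxi F \<xi>) K"

end

theory Submission
  imports Defs
begin


lemma vi_exists:
  fixes G :: "'a::euclidean_space \<Rightarrow> 'a"
  assumes C: "compact C" "convex C" "C \<noteq> {}" and G: "continuous_on C G"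
  shows "\<exists>x\<in>C. \<forall>y\<in>C. inner (G x) (y - x) \<ge> 0"
proof -
  have cl: "closed C" using C by (simp add: compact_imp_closed)
  define f where "f = (\<lambda>x. closest_point C (x - G x))"
  have "continuous_on C f" unfolding f_def
    by (intro continuous_on_compose2[OF continuous_on_closest_point[OF C(2) cl C(3)]]
        continuous_intros G) auto
  moreover have "f \<in> C \<rightarrow> C" unfolding f_def using closest_point_in_set[OF cl C(3)] by auto
  ultimately obtain x where x: "x \<in> C" "f x = x" using brouwer[OF C] by metis
  show ?thesis
  proof (intro bexI[OF _ x(1)] ballI)
    fix y assume "y \<in> C"
    from closest_point_dot[OF C(2) cl this, of "x - G x"] x(2)
    show "inner (G x) (y - x) \<ge> 0" unfolding f_def by (simp add: inner_minus_left)
  qed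
qed

lemma minty:
  fixes G :: "'a::euclidean_space \<Rightarrow> 'a"
  assumes C: "convex C" and G: "continuous_on C G" and x: "x \<in> C"
    and M: "\<forall>y\<in>C. inner (G y) (y - x) \<ge> 0"
  shows "\<forall>y\<in>C. inner (G x) (y - x) \<ge> 0"
proof
  fix y assume y: "y \<in> C"
  define s where "s k = x + (1 / real (Suc k)) *\<^sub>R (y - x)" for k
  have sC: "s k \<in> C" for k
  proof -
    have "s k = (1 - 1 / real (Suc k)) *\<^sub>R x + (1 / real (Suc k)) *\<^sub>R y"
      unfolding s_def by (simp add: algebra_simps)
    also have "\<dots> \<in> C"
    proof (rule convexD[OF C x y])
      show "0 \<le> 1 - 1 / real (Suc k)" by (simp add: divide_le_eq)
    qed auto
    finally show ?thesis .
  qed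
  have "(\<lambda>k. 1 / real (Suc k)) \<longlonglongrightarrow> 0" by (rule LIMSEQ_inverse_real_of_nat[unfolded inverse_eq_divide])
  hence "s \<longlonglongrightarrow> x + 0 *\<^sub>R (y - x)" unfolding s_def by (intro tendsto_intros)
  hence sx: "s \<longlonglongrightarrow> x" by simp
  have "(G \<circ> s) \<longlonglongrightarrow> G x" using G x sC sx unfolding continuous_on_sequentially by blast
  hence lim: "(\<lambda>k. inner (G (s k)) (y - x)) \<longlonglongrightarrow> inner (G x) (y - x)"
    by (intro tendsto_intros) (simp add: o_def)
  have "inner (G (s k)) (y - x) \<ge> 0" for k
  proof -
    have "0 \<le> inner (G (s k)) (s k - x)" using M sC by blast
    also have "\<dots> = (1 / real (Suc k)) * inner (G (s k)) (y - x)" unfolding s_def by simp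
    finally show ?thesis by (simp add: zero_le_divide_iff add_pos_nonneg)
  qed
  then show "inner (G x) (y - x) \<ge> 0" using LIMSEQ_le_const[OF lim] by blast
qed

lemma vi_convex:
  fixes G :: "'a::euclidean_space \<Rightarrow> 'a"
  assumes C: "convex C" and G: "continuous_on C G"
    and mono: "\<forall>x\<in>C. \<forall>y\<in>C. inner (G y - G x) (y - x) \<ge> 0"
  shows "convex {x\<in>C. \<forall>y\<in>C. inner (G x) (y - x) \<ge> 0}"
proof -
  have eq: "{x\<in>C. \<forall>y\<in>C. inner (G x) (y - x) \<ge> 0} = {x\<in>C. \<forall>y\<in>C. inner (G y) (y - x) \<ge> 0}"
  proof safe
    fix x y assume x: "x \<in> C" "\<forall>y\<in>C. inner (G x) (y - x) \<ge> 0" and y: "y \<in> C"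
    have "inner (G y - G x) (y - x) \<ge> 0" using mono x y by blast
    moreover have "inner (G x) (y - x) \<ge> 0" using x y by blast
    ultimately show "inner (G y) (y - x) \<ge> 0" by (simp add: inner_diff_left)
  next
    fix x y assume "x \<in> C" "\<forall>y\<in>C. inner (G y) (y - x) \<ge> 0" "y \<in> C"
    then show "inner (G x) (y - x) \<ge> 0" using minty[OF C G] by blast
  qed
  have eq2: "{x\<in>C. \<forall>y\<in>C. inner (G y) (y - x) \<ge> 0} = C \<inter> (\<Inter>y\<in>C. {x. inner (G y) x \<le> inner (G y) y})"
    by (auto simp: inner_diff_right)
  show ?thesis unfolding eq eq2
    by (intro convex_Int C convex_INT convex_halfspace_le)
qed

lemma l2g:
  fixes G :: "'a::euclidean_space \<Rightarrow> 'a"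
  assumes C: "convex C" and w: "w \<in> C" "dist a w < R"
    and S: "\<forall>y\<in>C \<inter> cball a R. inner (G w) (y - w) \<ge> 0"
  shows "\<forall>y\<in>C. inner (G w) (y - w) \<ge> 0"
proof
  fix y assume y: "y \<in> C"
  show "inner (G w) (y - w) \<ge> 0"
  proof (cases "y = w")
    case True then show ?thesis by simp
  next
    case False
    hence ny: "norm (y - w) > 0" by simp
    define t where "t = min 1 ((R - dist a w) / norm (y - w))"
    have t: "t > 0" "t \<le> 1" using w ny by (auto simp: t_def)
    have tn: "t * norm (y - w) \<le> R - dist a w" using ny unfolding t_def
      by (metis min.cobounded2 mult.commute pos_le_divide_eq)
    define z where "z = w + t *\<^sub>R (y - w)"
    have "z = (1 - t) *\<^sub>R w + t *\<^sub>R y" unfolding z_def by (simp add: algebra_simps)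
    hence zC: "z \<in> C" using convexD[OF C w(1) y] t by simp
    have "dist a z \<le> dist a w + dist w z" by (rule dist_triangle)
    also have "dist w z = t * norm (y - w)" unfolding z_def dist_norm using t by simp
    finally have "dist a z \<le> R" using tn by simp
    hence "0 \<le> inner (G w) (z - w)" using S zC by auto
    also have "\<dots> = t * inner (G w) (y - w)" unfolding z_def by simp
    finally show ?thesis using t by (simp add: zero_le_mult_iff)
  qed
qed

lemma Delta_compact: "compact (Delta :: (real^'m::finite) set)"
proof -
  have "closed (Delta :: (real^'m) set)" unfolding Delta_def
    by (intro closed_Collect_all closed_Collect_conj closed_Collect_le closed_Collect_eq continuous_intros)
  moreover have "bounded (Delta :: (real^'m) set)"
  proof -
    have "norm \<xi> \<le> 1" if "\<xi> \<in> (Delta :: (real^'m) set)" for \<xi>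
    proof -
      have "norm \<xi> \<le> (\<Sum>l\<in>UNIV. \<bar>\<xi> $ l\<bar>)" by (rule norm_le_l1_cart)
      also have "\<dots> = (\<Sum>l\<in>UNIV. \<xi> $ l)" using that by (simp add: Delta_def)
      finally show ?thesis using that by (simp add: Delta_def)
    qed
    then show ?thesis unfolding bounded_iff by blast
  qed
  ultimately show ?thesis by (simp add: compact_eq_bounded_closed)
qed

lemma Delta_convex: "convex (Delta :: (real^'m::finite) set)"
proof (unfold convex_def, intro ballI allI impI)
  fix x y :: "real^'m" and u v :: real
  assume x: "x \<in> Delta" and y: "y \<in> Delta" and uv: "0 \<le> u" "0 \<le> v" "u + v = 1"
  have "(\<Sum>l\<in>UNIV. u * x $ l + v * y $ l) = u * (\<Sum>l\<in>UNIV. x $ l) + v * (\<Sum>l\<in>UNIV. y $ l)"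
    by (simp add: sum.distrib sum_distrib_left)
  also have "\<dots> = 1" using x y uv by (simp add: Delta_def)
  finally have s: "(\<Sum>l\<in>UNIV. u * x $ l + v * y $ l) = 1" .
  have "0 \<le> u * x $ l + v * y $ l" for l using x y uv by (simp add: Delta_def)
  with s show "u *\<^sub>R x + v *\<^sub>R y \<in> Delta" by (simp add: Delta_def)
qed

lemma Fxi_joint_cont:
  assumes F_cont: "\<And>l. continuous_on K (F l)" and S: "snd ` S \<subseteq> K"
  shows "continuous_on S (\<lambda>p. Fxi F (fst p) (snd p))"
  unfolding Fxi_def
  by (intro continuous_intros continuous_on_compose2[OF F_cont continuous_on_snd S])

lemma Fxi_cont:
  assumes F_cont: "\<And>l. continuous_on K (F l)"
  shows "continuous_on K (Fxi F \<xi>)"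
  unfolding Fxi_def by (intro continuous_intros F_cont)

lemma Fxi_mono:
  assumes F_mono: "\<And>l. monotone_on_K K (F l)" and xi: "\<forall>l. \<xi> $ l \<ge> 0"
  shows "\<forall>x\<in>K. \<forall>y\<in>K. inner (Fxi F \<xi> y - Fxi F \<xi> x) (y - x) \<ge> 0"
proof (intro ballI)
  fix x y assume "x \<in> K" "y \<in> K"
  hence "inner (F l y - F l x) (y - x) \<ge> 0" for l using F_mono unfolding monotone_on_K_def by blast
  moreover have "Fxi F \<xi> y - Fxi F \<xi> x = (\<Sum>l\<in>UNIV. \<xi> $ l *\<^sub>R (F l y - F l x))"
    by (simp add: Fxi_def sum_subtractf scaleR_diff_right)
  hence "inner (Fxi F \<xi> y - Fxi F \<xi> x) (y - x) = (\<Sum>l\<in>UNIV. \<xi> $ l * inner (F l y - F l x) (y - x))"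
    by (simp add: inner_sum_left)
  ultimately show "inner (Fxi F \<xi> y - Fxi F \<xi> x) (y - x) \<ge> 0"
    using xi by (simp add: sum_nonneg)
qed

lemma basicS_Sol_w:
  assumes "\<xi> \<in> Delta"
  shows "basicS F K \<xi> \<subseteq> Sol_w F K"
proof
  fix x assume x: "x \<in> basicS F K \<xi>"
  hence xK: "x \<in> K" by (simp add: basicS_def VI_Sol_def)
  have "\<not> (\<forall>l. inner (F l x) (x - y) > 0)" if y: "y \<in> K" for y
  proof
    assume P: "\<forall>l. inner (F l x) (x - y) > 0"
    have "\<exists>l0. \<xi> $ l0 > 0"
    proof (rule ccontr)
      assume "\<not> (\<exists>l0. \<xi> $ l0 > 0)"
      hence "\<forall>l. \<xi> $ l = 0" using assms unfolding Delta_def by (metis (mono_tags, lifting) mem_Collect_eq antisym not_less)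
      thus False using assms by (simp add: Delta_def)
    qed
    then obtain l0 where l0: "\<xi> $ l0 > 0" by blast
    have "inner (Fxi F \<xi> x) (x - y) = (\<Sum>l\<in>UNIV. \<xi> $ l * inner (F l x) (x - y))"
      unfolding Fxi_def by (simp add: inner_sum_left)
    also have "\<dots> > 0"
    proof (rule sum_pos2[where i=l0])
      show "0 \<le> \<xi> $ i * inner (F i x) (x - y)" if "i \<in> UNIV" for i
      proof -
        have "0 \<le> \<xi> $ i" using assms by (simp add: Delta_def)
        moreover have "0 \<le> inner (F i x) (x - y)" using P less_imp_le by blast
        ultimately show ?thesis by simp
      qed
    qed (use l0 P in auto)
    finally have "inner (Fxi F \<xi> x) (x - y) > 0" .
    moreover have "inner (Fxi F \<xi> x) (y - x) \<ge> 0" using x y by (simp add: basicS_def VI_Sol_def)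
    ultimately show False by (simp add: inner_diff_right)
  qed
  with xK show "x \<in> Sol_w F K" by (simp add: Sol_w_def)
qed


lemma core:
  fixes K :: "(real^'n) set" and F :: "'m::finite \<Rightarrow> real^'n \<Rightarrow> real^'n" and \<xi>0 :: "real^'m"
  assumes K_closed: "closed K" and K_convex: "convex K"
    and F_cont: "\<And>l. continuous_on K (F l)" and F_mono: "\<And>l. monotone_on_K K (F l)"
    and xi0: "\<xi>0 \<in> Delta" and ne: "basicS F K \<xi>0 \<noteq> {}" and bd: "bounded (basicS F K \<xi>0)"
  shows "\<exists>\<delta>>0. \<forall>V. V \<subseteq> Delta \<inter> cball \<xi>0 \<delta> \<longrightarrow> compact V \<longrightarrow> convex V \<longrightarrow> \<xi>0 \<in> V \<longrightarrow>
     (\<exists>W. connected W \<and> W \<subseteq> (\<Union>\<xi>\<in>V. basicS F K \<xi>) \<and> W \<inter> basicS F K \<xi>0 \<noteq> {}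
          \<and> (\<forall>\<xi>\<in>V. basicS F K \<xi> \<inter> W \<noteq> {}))"
proof -
  define S0 where "S0 = basicS F K \<xi>0"
  obtain x0 where x0: "x0 \<in> S0" using ne S0_def by auto
  have x0K: "x0 \<in> K" using x0 by (simp add: S0_def basicS_def VI_Sol_def)
  obtain r where r: "r > 0" "S0 \<subseteq> ball x0 r" using bounded_subset_ballD[OF bd] S0_def by auto
  define R where "R = 2 * r"
  define KR where "KR = K \<inter> cball x0 R"
  have KRc: "compact KR" unfolding KR_def by (intro closed_Int_compact K_closed compact_cball)
  have KRv: "convex KR" unfolding KR_def by (intro convex_Int K_convex convex_cball)
  have x0KR: "x0 \<in> KR" using x0K r by (simp add: KR_def R_def)
  have KRK: "KR \<subseteq> K" by (simp add: KR_def)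
  define sol where "sol \<xi> = {z\<in>KR. \<forall>y\<in>KR. inner (Fxi F \<xi> z) (y - z) \<ge> 0}" for \<xi>
  have nonneg: "\<forall>l. \<xi> $ l \<ge> 0" if "\<xi> \<in> Delta" for \<xi> :: "real^'m" using that by (simp add: Delta_def)
  have solconv: "convex (sol \<xi>)" if "\<xi> \<in> Delta" for \<xi>
    unfolding sol_def
    by (rule vi_convex[OF KRv continuous_on_subset[OF Fxi_cont[where K=K and F=F and \<xi>=\<xi>, OF F_cont] KRK]])
       (use Fxi_mono[OF F_mono nonneg[OF that]] KRK in \<open>meson subsetD\<close>)
  have solne: "sol \<xi> \<noteq> {}" for \<xi>
    using vi_exists[OF KRc KRv _ continuous_on_subset[OF Fxi_cont[where K=K and F=F and \<xi>=\<xi>, OF F_cont] KRK]] x0KR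
    unfolding sol_def by blast
  have sol_basic: "sol \<xi> \<subseteq> basicS F K \<xi>" if "\<forall>z\<in>sol \<xi>. dist x0 z < R" for \<xi>
  proof
    fix z assume z: "z \<in> sol \<xi>"
    hence zK: "z \<in> K" and zs: "\<forall>y\<in>K \<inter> cball x0 R. inner (Fxi F \<xi> z) (y - z) \<ge> 0"
      by (auto simp: sol_def KR_def)
    have "\<forall>y\<in>K. inner (Fxi F \<xi> z) (y - z) \<ge> 0" by (rule l2g[OF K_convex zK]) (use that z zs in auto)
    with zK show "z \<in> basicS F K \<xi>" by (simp add: basicS_def VI_Sol_def)
  qed
  have claimA: "dist x0 z < R" if z: "z \<in> sol \<xi>0" for z
  proof (rule ccontr)
    assume "\<not> dist x0 z < R"
    moreover have "dist x0 z \<le> R" using z by (simp add: sol_def KR_def)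
    ultimately have dz: "dist x0 z = R" by simp
    have x0s: "x0 \<in> sol \<xi>0" using x0 x0KR KRK by (auto simp: sol_def S0_def basicS_def VI_Sol_def)
    define w where "w = (1/4) *\<^sub>R x0 + (3/4) *\<^sub>R z"
    have ws: "w \<in> sol \<xi>0" unfolding w_def by (rule convexD[OF solconv[OF xi0] x0s z]) auto
    have h: "(1/4) *\<^sub>R x0 + (3/4) *\<^sub>R x0 = x0" using scaleR_add_left[of "1/4" "3/4" x0] by simp
    have "x0 - w = ((1/4) *\<^sub>R x0 + (3/4) *\<^sub>R x0) - w" using h by simp
    also have "\<dots> = (3/4) *\<^sub>R (x0 - z)" by (simp add: w_def algebra_simps)
    finally have "x0 - w = (3/4) *\<^sub>R (x0 - z)" .
    hence dw: "dist x0 w = (3/4) * R" using dz by (simp add: dist_norm)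
    have wK: "w \<in> K" and wsol: "\<forall>y\<in>K \<inter> cball x0 R. inner (Fxi F \<xi>0 w) (y - w) \<ge> 0"
      using ws by (auto simp: sol_def KR_def)
    have "\<forall>y\<in>K. inner (Fxi F \<xi>0 w) (y - w) \<ge> 0"
      by (rule l2g[OF K_convex wK]) (use dw r wsol in \<open>auto simp: R_def\<close>)
    hence "w \<in> S0" using wK by (simp add: S0_def basicS_def VI_Sol_def)
    hence "dist x0 w < r" using r by auto
    thus False using dw r by (simp add: R_def)
  qed
  define P where "P = (Delta :: (real^'m) set) \<times> (KR \<inter> sphere x0 R)"
  define f where "f = (\<lambda>y (p :: (real^'m) \<times> (real^'n)). inner (Fxi F (fst p) (snd p)) (y - snd p))"
  define T where "T = (\<Inter>y\<in>KR. P \<inter> f y -` {0..})"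
  define E where "E = P \<inter> T"
  have Pc: "compact P" unfolding P_def
    by (intro compact_Times Delta_compact compact_Int_closed KRc closed_sphere)
  have fc: "continuous_on P (f y)" for y unfolding f_def
    by (intro continuous_intros Fxi_joint_cont[where K=K and F=F, OF F_cont]) (auto simp: P_def KR_def)
  have "closed T" unfolding T_def
    by (intro closed_INT ballI continuous_closed_preimage fc compact_imp_closed[OF Pc] closed_atLeast)
  hence Ec: "compact E" unfolding E_def by (rule compact_Int_closed[OF Pc])
  have Tmem: "p \<in> T \<longleftrightarrow> (\<forall>y\<in>KR. p \<in> P \<and> f y p \<ge> 0)" for p
    unfolding T_def INT_iff vimage_eq Int_iff atLeast_iff by (rule refl)
  have Emem: "(a, b) \<in> E \<longleftrightarrow> a \<in> Delta \<and> dist x0 b = R \<and> b \<in> sol a" for a b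
  proof -
    have "(a, b) \<in> E \<longleftrightarrow> (a, b) \<in> P \<and> (\<forall>y\<in>KR. f y (a, b) \<ge> 0)"
      unfolding E_def Int_iff Tmem using x0KR by blast
    also have "\<dots> \<longleftrightarrow> a \<in> Delta \<and> dist x0 b = R \<and> b \<in> sol a"
      unfolding P_def f_def sol_def by auto
    finally show ?thesis .
  qed
  have "\<xi>0 \<notin> fst ` E"
  proof
    assume "\<xi>0 \<in> fst ` E"
    then obtain z where zE: "(\<xi>0, z) \<in> E" by force
    hence "z \<in> sol \<xi>0" "dist x0 z = R"
      using Emem by auto
    thus False using claimA by auto
  qed
  hence xin: "\<xi>0 \<in> - fst ` E" by simp
  have "compact (fst ` E)" by (rule compact_continuous_image[OF continuous_on_fst[OF continuous_on_id] Ec])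
  hence "closed (fst ` E)" by (rule compact_imp_closed)
  hence "open (- fst ` E)" by (simp add: open_Compl)
  then obtain \<delta> where \<delta>: "\<delta> > 0" "ball \<xi>0 \<delta> \<subseteq> - fst ` E"
    using xin open_contains_ball by metis
  have good: "sol \<xi> \<subseteq> basicS F K \<xi>" if "\<xi> \<in> Delta" "dist \<xi>0 \<xi> < \<delta>" for \<xi>
  proof (rule sol_basic, rule ballI)
    fix z assume z: "z \<in> sol \<xi>"
    have "dist x0 z \<le> R" using z by (simp add: sol_def KR_def)
    moreover have "dist x0 z \<noteq> R"
    proof
      assume "dist x0 z = R"
      hence "(\<xi>, z) \<in> E" using z that(1) Emem by auto
      hence "\<xi> \<in> fst ` E" by force
      moreover have "\<xi> \<in> ball \<xi>0 \<delta>" using that by simp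
      ultimately show False using \<delta> by auto
    qed
    ultimately show "dist x0 z < R" by simp
  qed
  show ?thesis
  proof (intro exI[of _ "\<delta>/2"] conjI allI impI)
    show "\<delta>/2 > 0" using \<delta> by simp
    fix V assume V: "V \<subseteq> Delta \<inter> cball \<xi>0 (\<delta>/2)" "compact V" "convex V" "\<xi>0 \<in> V"
    have Vgood: "sol \<xi> \<subseteq> basicS F K \<xi>" if "\<xi> \<in> V" for \<xi>
      using V that \<delta> by (intro good) auto
    define Q where "Q = V \<times> KR"
    have Qc: "compact Q" unfolding Q_def by (intro compact_Times V(2) KRc)
    have fcQ: "continuous_on Q (f y)" for y unfolding f_def
      by (intro continuous_intros Fxi_joint_cont[where K=K and F=F, OF F_cont]) (auto simp: Q_def KR_def)
    define \<Gamma> where "\<Gamma> = Q \<inter> (\<Inter>y\<in>KR. Q \<inter> f y -` {0..})"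
    have "closed (\<Inter>y\<in>KR. Q \<inter> f y -` {0..})"
      by (intro closed_INT ballI continuous_closed_preimage fcQ compact_imp_closed[OF Qc] closed_atLeast)
    hence Gc: "compact \<Gamma>" unfolding \<Gamma>_def by (rule compact_Int_closed[OF Qc])
    have Gmem: "p \<in> \<Gamma> \<longleftrightarrow> p \<in> Q \<and> (\<forall>y\<in>KR. f y p \<ge> 0)" for p
      unfolding \<Gamma>_def INT_iff vimage_eq Int_iff atLeast_iff using x0KR by blast
    have Geq: "\<Gamma> = {p. fst p \<in> V \<and> snd p \<in> sol (fst p)}"
    proof (rule set_eqI)
      fix p :: "(real^'m) \<times> (real^'n)"
      obtain a b where p: "p = (a, b)" by (cases p)
      show "p \<in> \<Gamma> \<longleftrightarrow> p \<in> {p. fst p \<in> V \<and> snd p \<in> sol (fst p)}"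
        unfolding Gmem p Q_def f_def sol_def by auto
    qed
    have fimg: "fst ` \<Gamma> = V"
    proof
      show "fst ` \<Gamma> \<subseteq> V" by (auto simp: Geq)
      show "V \<subseteq> fst ` \<Gamma>"
      proof
        fix \<xi> assume "\<xi> \<in> V"
        moreover obtain z where "z \<in> sol \<xi>" using solne by blast
        ultimately have "(\<xi>, z) \<in> \<Gamma>" by (simp add: Geq)
        thus "\<xi> \<in> fst ` \<Gamma>" by force
      qed
    qed
    have "connected (\<Gamma> \<inter> fst -` V)"
    proof (rule connected_closed_monotone_preimage[OF continuous_on_fst[OF continuous_on_id] fimg])
      fix C assume C: "closedin (top_of_set \<Gamma>) C"
      have cC: "closed C" by (rule closedin_closed_trans[OF C compact_imp_closed[OF Gc]])
      have CG: "C \<subseteq> \<Gamma>" by (rule closedin_imp_subset[OF C])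
      have "compact (\<Gamma> \<inter> C)" by (rule compact_Int_closed[OF Gc cC])
      moreover have "\<Gamma> \<inter> C = C" using CG by blast
      ultimately have "compact C" by simp
      hence "closed (fst ` C)" by (intro compact_imp_closed compact_continuous_image continuous_on_fst continuous_on_id)
      moreover have "fst ` C \<subseteq> V" using CG fimg by blast
      ultimately show "closedin (top_of_set V) (fst ` C)" by (simp add: closed_subset)
    next
      fix \<xi> assume "\<xi> \<in> V"
      hence "\<Gamma> \<inter> fst -` {\<xi>} = {\<xi>} \<times> sol \<xi>" by (auto simp: Geq)
      moreover have "convex ({\<xi>} \<times> sol \<xi>)"
        using solconv \<open>\<xi> \<in> V\<close> V(1) by (intro convex_Times convex_singleton) auto
      ultimately show "connected (\<Gamma> \<inter> fst -` {\<xi>})" by (metis convex_connected)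
    qed (use V convex_connected in auto)
    moreover have "\<Gamma> \<inter> fst -` V = \<Gamma>" by (auto simp: Geq)
    ultimately have Gconn: "connected \<Gamma>" by simp
    define W where "W = snd ` \<Gamma>"
    have "connected W" unfolding W_def by (rule connected_continuous_image[OF continuous_on_snd[OF continuous_on_id] Gconn])
    moreover have "W \<subseteq> (\<Union>\<xi>\<in>V. basicS F K \<xi>)" using Vgood by (force simp: W_def Geq)
    moreover have hit: "basicS F K \<xi> \<inter> W \<noteq> {}" if "\<xi> \<in> V" for \<xi>
    proof -
      obtain z where z: "z \<in> sol \<xi>" using solne by blast
      hence "(\<xi>, z) \<in> \<Gamma>" using that by (simp add: Geq)
      hence "z \<in> W" unfolding W_def by force
      moreover have "z \<in> basicS F K \<xi>" using Vgood[OF that] z by blast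
      ultimately show ?thesis by blast
    qed
    moreover have "W \<inter> basicS F K \<xi>0 \<noteq> {}" using hit[OF V(4)] by blast
    ultimately show "\<exists>W. connected W \<and> W \<subseteq> (\<Union>\<xi>\<in>V. basicS F K \<xi>) \<and> W \<inter> basicS F K \<xi>0 \<noteq> {}
          \<and> (\<forall>\<xi>\<in>V. basicS F K \<xi> \<inter> W \<noteq> {})" by blast
  qed
qed


lemma comp_lemma:
  assumes "connected S" "S \<subseteq> U" "S \<inter> connected_component_set U x \<noteq> {}"
  shows "S \<subseteq> connected_component_set U x"
proof -
  obtain a where a: "a \<in> S" "a \<in> connected_component_set U x" using assms(3) by blast
  have "S \<subseteq> connected_component_set U a" by (rule connected_component_maximal[OF a(1) assms(1,2)])
  also have "\<dots> = connected_component_set U x" by (rule connected_component_eq[OF a(2)])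
  finally show ?thesis .
qed

lemma basicS_convex:
  fixes K :: "(real^'n) set" and F :: "'m::finite \<Rightarrow> real^'n \<Rightarrow> real^'n"
  assumes K_convex: "convex K"
    and F_cont: "\<And>l. continuous_on K (F l)" and F_mono: "\<And>l. monotone_on_K K (F l)"
    and xi: "\<xi> \<in> Delta"
  shows "convex (basicS F K \<xi>)"
proof -
  have "\<forall>l. \<xi> $ l \<ge> 0" using xi by (simp add: Delta_def)
  then show ?thesis unfolding basicS_def VI_Sol_def
    by (intro vi_convex[OF K_convex Fxi_cont[where K=K and F=F and \<xi>=\<xi>, OF F_cont]] Fxi_mono[OF F_mono])
qed

lemma open_step:
  fixes K :: "(real^'n) set" and F :: "'m::finite \<Rightarrow> real^'n \<Rightarrow> real^'n" and \<xi>0 :: "real^'m"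
  assumes K_closed: "closed K" and K_convex: "convex K"
    and F_cont: "\<And>l. continuous_on K (F l)" and F_mono: "\<And>l. monotone_on_K K (F l)"
    and D: "D \<subseteq> Delta" and U: "\<And>\<xi>. \<xi> \<in> D \<Longrightarrow> basicS F K \<xi> \<subseteq> U"
    and A: "A = connected_component_set U x" "bounded A"
    and xi0: "\<xi>0 \<in> D" "basicS F K \<xi>0 \<inter> A \<noteq> {}"
    and nbhd: "\<And>\<delta>. \<delta> > 0 \<Longrightarrow> \<exists>\<epsilon>>0. \<epsilon> \<le> \<delta> \<and> Delta \<inter> cball \<xi>0 \<epsilon> \<subseteq> D"
  shows "\<exists>e>0. \<forall>\<xi>\<in>D. dist \<xi> \<xi>0 < e \<longrightarrow> basicS F K \<xi> \<inter> A \<noteq> {}"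
proof -
  have xiD: "\<xi>0 \<in> Delta" using D xi0 by blast
  have S0A: "basicS F K \<xi>0 \<subseteq> A"
    unfolding A(1)
    by (rule comp_lemma[OF convex_connected[OF basicS_convex[OF K_convex F_cont F_mono xiD]] U[OF xi0(1)]])
       (use xi0 A in simp)
  have ne: "basicS F K \<xi>0 \<noteq> {}" using xi0 by blast
  have bd: "bounded (basicS F K \<xi>0)" using S0A A(2) bounded_subset by blast
  obtain \<delta> where \<delta>: "\<delta> > 0" and H: "\<forall>V. V \<subseteq> Delta \<inter> cball \<xi>0 \<delta> \<longrightarrow> compact V \<longrightarrow> convex V \<longrightarrow> \<xi>0 \<in> V \<longrightarrow>
     (\<exists>W. connected W \<and> W \<subseteq> (\<Union>\<xi>\<in>V. basicS F K \<xi>) \<and> W \<inter> basicS F K \<xi>0 \<noteq> {}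
          \<and> (\<forall>\<xi>\<in>V. basicS F K \<xi> \<inter> W \<noteq> {}))"
    using core[OF K_closed K_convex F_cont F_mono xiD ne bd] by blast
  obtain \<epsilon> where \<epsilon>: "\<epsilon> > 0" "\<epsilon> \<le> \<delta>" "Delta \<inter> cball \<xi>0 \<epsilon> \<subseteq> D" using nbhd[OF \<delta>] by blast
  define V where "V = Delta \<inter> cball \<xi>0 \<epsilon>"
  have "V \<subseteq> Delta \<inter> cball \<xi>0 \<delta>" using \<epsilon> by (auto simp: V_def)
  moreover have "compact V" unfolding V_def by (intro compact_Int_closed Delta_compact closed_cball)
  moreover have "convex V" unfolding V_def by (intro convex_Int Delta_convex convex_cball)
  moreover have "\<xi>0 \<in> V" using xiD \<epsilon> by (simp add: V_def)
  ultimately have "\<exists>W. connected W \<and> W \<subseteq> (\<Union>\<xi>\<in>V. basicS F K \<xi>) \<and> W \<inter> basicS F K \<xi>0 \<noteq> {}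
          \<and> (\<forall>\<xi>\<in>V. basicS F K \<xi> \<inter> W \<noteq> {})" by (rule H[rule_format])
  then obtain W where W: "connected W" "W \<subseteq> (\<Union>\<xi>\<in>V. basicS F K \<xi>)" "W \<inter> basicS F K \<xi>0 \<noteq> {}"
      "\<forall>\<xi>\<in>V. basicS F K \<xi> \<inter> W \<noteq> {}"
    by (elim exE conjE) (rule that)
  have VD: "V \<subseteq> D" using \<epsilon> by (simp add: V_def)
  have WU: "W \<subseteq> U" using W(2) VD U by blast
  have "W \<inter> A \<noteq> {}" using W(3) S0A by blast
  hence WA: "W \<subseteq> A" unfolding A(1) by (rule comp_lemma[OF W(1) WU, folded A(1)])
  show ?thesis
  proof (intro exI[of _ \<epsilon>] conjI ballI impI)
    show "\<epsilon> > 0" by fact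
    fix \<xi> assume "\<xi> \<in> D" "dist \<xi> \<xi>0 < \<epsilon>"
    hence "\<xi> \<in> V" using D by (auto simp: V_def dist_commute)
    thus "basicS F K \<xi> \<inter> A \<noteq> {}" using W(4) WA by blast
  qed
qed

theorem proposition3:
  fixes K :: "(real^'n) set" and F :: "'m::finite \<Rightarrow> real^'n \<Rightarrow> real^'n"
  assumes K_ne: "K \<noteq> {}" and K_closed: "closed K" and K_convex: "convex K"
    and F_cont: "\<And>l. continuous_on K (F l)"
    and F_mono: "\<And>l. monotone_on_K K (F l)"
  shows
    "(\<forall>A x. x \<in> Sol_w F K \<longrightarrow> A = connected_component_set (Sol_w F K) x \<longrightarrow> bounded A \<longrightarrow>
        openin (top_of_set (Delta :: (real^'m) set))
          {\<xi>\<in>Delta. basicS F K \<xi> \<inter> A \<noteq> {}})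
   \<and> (\<forall>A x. x \<in> Sol_pr F K \<longrightarrow> A = connected_component_set (Sol_pr F K) x \<longrightarrow> bounded A \<longrightarrow>
        openin (top_of_set (ri_Delta :: (real^'m) set))
          {\<xi>\<in>ri_Delta. basicS F K \<xi> \<inter> A \<noteq> {}})"
proof (intro conjI allI impI)
  fix A x
  assume A: "A = connected_component_set (Sol_w F K) x" "bounded A"
  show "openin (top_of_set (Delta :: (real^'m) set)) {\<xi>\<in>Delta. basicS F K \<xi> \<inter> A \<noteq> {}}"
    unfolding openin_euclidean_subtopology_iff
  proof (intro conjI ballI)
    fix \<xi>0 assume "\<xi>0 \<in> {\<xi>\<in>(Delta :: (real^'m) set). basicS F K \<xi> \<inter> A \<noteq> {}}"
    hence xi0: "\<xi>0 \<in> Delta" "basicS F K \<xi>0 \<inter> A \<noteq> {}" by auto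
    obtain e where "e > 0" "\<forall>\<xi>\<in>Delta. dist \<xi> \<xi>0 < e \<longrightarrow> basicS F K \<xi> \<inter> A \<noteq> {}"
      using open_step[OF K_closed K_convex F_cont F_mono subset_refl basicS_Sol_w A xi0] by blast
    then show "\<exists>e>0. \<forall>x'\<in>Delta. dist x' \<xi>0 < e \<longrightarrow> x' \<in> {\<xi>\<in>Delta. basicS F K \<xi> \<inter> A \<noteq> {}}"
      by blast
  qed auto
next
  fix A x
  assume A: "A = connected_component_set (Sol_pr F K) x" "bounded A"
  have riD: "(ri_Delta :: (real^'m) set) \<subseteq> Delta" by (auto simp: ri_Delta_def)
  have U: "basicS F K \<xi> \<subseteq> Sol_pr F K" if "\<xi> \<in> ri_Delta" for \<xi>
    using that unfolding Sol_pr_def basicS_def by blast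
  show "openin (top_of_set (ri_Delta :: (real^'m) set)) {\<xi>\<in>ri_Delta. basicS F K \<xi> \<inter> A \<noteq> {}}"
    unfolding openin_euclidean_subtopology_iff
  proof (intro conjI ballI)
    fix \<xi>0 assume "\<xi>0 \<in> {\<xi>\<in>(ri_Delta :: (real^'m) set). basicS F K \<xi> \<inter> A \<noteq> {}}"
    hence xi0: "\<xi>0 \<in> ri_Delta" "basicS F K \<xi>0 \<inter> A \<noteq> {}" by auto
    define e0 where "e0 = Min (range (\<lambda>l. \<xi>0 $ l))"
    have e0le: "e0 \<le> \<xi>0 $ l" for l unfolding e0_def by (rule Min_le) auto
    have e0pos: "e0 > 0" unfolding e0_def using xi0(1) by (subst Min_gr_iff) (auto simp: ri_Delta_def)
    have nbhd: "\<exists>\<epsilon>>0. \<epsilon> \<le> \<delta> \<and> Delta \<inter> cball \<xi>0 \<epsilon> \<subseteq> ri_Delta" if "\<delta> > 0" for \<delta>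
    proof (intro exI[of _ "min \<delta> (e0/2)"] conjI)
      show "min \<delta> (e0/2) > 0" using that e0pos by simp
      show "min \<delta> (e0/2) \<le> \<delta>" by simp
      show "Delta \<inter> cball \<xi>0 (min \<delta> (e0/2)) \<subseteq> ri_Delta"
      proof
        fix \<xi> assume \<xi>: "\<xi> \<in> Delta \<inter> cball \<xi>0 (min \<delta> (e0/2))"
        have "\<xi> $ l > 0" for l
        proof -
          have "\<bar>(\<xi>0 - \<xi>) $ l\<bar> \<le> norm (\<xi>0 - \<xi>)" by (rule component_le_norm_cart)
          also have "\<dots> \<le> e0/2" using \<xi> by (simp add: dist_norm)
          finally have "\<bar>\<xi>0 $ l - \<xi> $ l\<bar> \<le> e0/2" by simp
          thus ?thesis using e0le[of l] e0pos by linarith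
        qed
        thus "\<xi> \<in> ri_Delta" using \<xi> by (simp add: ri_Delta_def)
      qed
    qed
    obtain e where "e > 0" "\<forall>\<xi>\<in>ri_Delta. dist \<xi> \<xi>0 < e \<longrightarrow> basicS F K \<xi> \<inter> A \<noteq> {}"
      using open_step[OF K_closed K_convex F_cont F_mono riD U A xi0 nbhd] by blast
    then show "\<exists>e>0. \<forall>x'\<in>ri_Delta. dist x' \<xi>0 < e \<longrightarrow> x' \<in> {\<xi>\<in>ri_Delta. basicS F K \<xi> \<inter> A \<noteq> {}}"
      by blast
  qed auto
qed


end
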